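(* Let $M$ be a closed manifold and $\phi\in A^1(\mathbb{R}^2,M)$. If $\phi$ has a dense orbit homeomorphic to a cylinder $S^1\times\mathbb{R}$, then every two-dimensional orbit of $\phi$ is homeomorphic either to a torus $\mathbb{T}^2$ or to a cylinder $S^1\times\mathbb{R}$.
   Context: $A^1(\mathbb{R}^2,M)$ is the set of actions $\phi:\mathbb{R}^2\times M\to M$ of $\mathbb{R}^2$ on $M$ with $C^1$ infinitesimal generators. The orbit of $p$ is $\mathcal{O}_p=\{\phi(\omega,p):\omega\in\mathbb{R}^2\}$, identified with $\mathbb{R}^2/G_p$ where $G_p=\{\omega:\phi(\omega,p)=p\}$ is the isotropy group; an orbit is two-dimensional if $G_p$ is discrete. *)

theory Defs
  imports "HOL-Analysis.Analysis"
begin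

definition C1_on :: "'a::euclidean_space set \<Rightarrow> ('a \<Rightarrow> 'b::euclidean_space) \<Rightarrow> bool" where
  "C1_on U f \<longleftrightarrow> (\<exists>f'. (\<forall>x\<in>U. (f has_derivative blinfun_apply (f' x)) (at x))
                        \<and> continuous_on U f')"

definition C1_submanifold :: "nat \<Rightarrow> 'a::euclidean_space set \<Rightarrow> bool" where
  "C1_submanifold k M \<longleftrightarrow>
     (\<forall>p\<in>M. \<exists>U V (h::'a \<Rightarrow> 'a) g S. open U \<and> p \<in> U \<and> open V \<and> h ` U = V \<and>
        (\<forall>x\<in>U. g (h x) = x) \<and> (\<forall>y\<in>V. h (g y) = y) \<and> C1_on U h \<and> C1_on V g \<and>
        subspace S \<and> dim S = k \<and> h ` (U \<inter> M) = V \<inter> S)"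

text \<open>Closed manifold: compact, nonempty, boundaryless C^1 manifold (embedded in some
  Euclidean space, which is no loss of generality by Whitney embedding).\<close>
definition closed_manifold :: "'a::euclidean_space set \<Rightarrow> bool" where
  "closed_manifold M \<longleftrightarrow> compact M \<and> M \<noteq> {} \<and> (\<exists>k. C1_submanifold k M)"

text \<open>Actions of R^2 on M with C^1 infinitesimal generators (the class A^1(R^2,M)).\<close>
definition C1_action :: "'a::euclidean_space set \<Rightarrow> (real \<times> real \<Rightarrow> 'a \<Rightarrow> 'a) \<Rightarrow> bool" where
  "C1_action M \<phi> \<longleftrightarrow>
     (\<forall>\<omega>. \<forall>p\<in>M. \<phi> \<omega> p \<in> M) \<and>
     (\<forall>p\<in>M. \<phi> 0 p = p) \<and>
     (\<forall>\<omega> \<omega>'. \<forall>p\<in>M. \<phi> (\<omega> + \<omega>') p = \<phi> \<omega> (\<phi> \<omega>' p)) \<and>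
     continuous_on (UNIV \<times> M) (\<lambda>(\<omega>, p). \<phi> \<omega> p) \<and>
     (\<exists>U X1 X2. open U \<and> M \<subseteq> U \<and> C1_on U X1 \<and> C1_on U X2 \<and>
        (\<forall>p\<in>M. ((\<lambda>t. \<phi> (t, 0) p) has_vector_derivative X1 p) (at 0) \<and>
                ((\<lambda>t. \<phi> (0, t) p) has_vector_derivative X2 p) (at 0)))"

definition orbit :: "(real \<times> real \<Rightarrow> 'a \<Rightarrow> 'a) \<Rightarrow> 'a \<Rightarrow> 'a set" where
  "orbit \<phi> p = range (\<lambda>\<omega>. \<phi> \<omega> p)"

definition isotropy :: "(real \<times> real \<Rightarrow> 'a \<Rightarrow> 'a) \<Rightarrow> 'a \<Rightarrow> (real \<times> real) set" where
  "isotropy \<phi> p = {\<omega>. \<phi> \<omega> p = p}"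

definition two_dim_orbit :: "(real \<times> real \<Rightarrow> 'a \<Rightarrow> 'a) \<Rightarrow> 'a \<Rightarrow> bool" where
  "two_dim_orbit \<phi> p \<longleftrightarrow> discrete (isotropy \<phi> p)"

text \<open>The orbit of p, identified with R^2 / G_p (quotient topology), is homeomorphic to C:
  there is a continuous open surjection R^2 \<rightarrow> C whose fibres are exactly the fibres of
  \<omega> \<mapsto> \<phi> \<omega> p, i.e. the cosets of G_p.\<close>
definition orbit_homeomorphic :: "(real \<times> real \<Rightarrow> 'a \<Rightarrow> 'a) \<Rightarrow> 'a \<Rightarrow> 'b::topological_space set \<Rightarrow> bool" where
  "orbit_homeomorphic \<phi> p C \<longleftrightarrow>
     (\<exists>h :: real \<times> real \<Rightarrow> 'b. continuous_on UNIV h \<and> h ` UNIV = C \<and>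
        (\<forall>U. open U \<longrightarrow> openin (top_of_set C) (h ` U)) \<and>
        (\<forall>\<omega> \<omega>'. h \<omega> = h \<omega>' \<longleftrightarrow> \<phi> \<omega> p = \<phi> \<omega>' p))"

definition cylinder :: "(complex \<times> real) set" where
  "cylinder = sphere 0 1 \<times> UNIV"

definition torus :: "(complex \<times> complex) set" where
  "torus = sphere 0 1 \<times> sphere 0 1"

end

theory Submission
  imports Defs
begin


definition circ :: "real \<Rightarrow> complex" where
  "circ t = exp (\<i> * of_real (2*pi*t))"

lemma circ_norm: "norm (circ t) = 1"
  by (simp add: circ_def)

lemma circ_eq_iff: "circ a = circ b \<longleftrightarrow> (\<exists>n::int. a = b + of_int n)"
proof -
  have "circ a = circ b \<longleftrightarrow> (\<exists>n::int. \<i> * of_real (2*pi*a) = \<i> * of_real (2*pi*b) + (of_int (2 * n) * pi) * \<i>)"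
    unfolding circ_def by (rule exp_eq)
  also have "\<dots> \<longleftrightarrow> (\<exists>n::int. a = b + of_int n)"
  proof -
    have "\<i> * of_real (2*pi*a) = \<i> * of_real (2*pi*b) + (of_int (2 * n) * pi) * \<i> \<longleftrightarrow> a = b + of_int n" for n::int
    proof -
      have "\<i> * of_real (2*pi*a) = \<i> * of_real (2*pi*b) + (of_int (2 * n) * pi) * \<i> \<longleftrightarrow>
            \<i> * complex_of_real (2*pi*a) = \<i> * of_real (2*pi*b + 2 * of_int n * pi)"
        by (simp add: algebra_simps)
      also have "\<dots> \<longleftrightarrow> complex_of_real (2*pi*a) = of_real (2*pi*b + 2 * of_int n * pi)"
        by (subst mult_cancel_left) simp
      also have "\<dots> \<longleftrightarrow> 2*pi*a = 2*pi*b + 2 * of_int n * pi" using of_real_eq_iff by blast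
      also have "\<dots> \<longleftrightarrow> (2*pi)*a = (2*pi)*(b + of_int n)" by (simp add: algebra_simps)
      also have "\<dots> \<longleftrightarrow> a = b + of_int n" by (subst mult_cancel_left) simp
      finally show ?thesis .
    qed
    then show ?thesis by auto
  qed
  finally show ?thesis .
qed

lemma circ_surj: "range circ = sphere 0 1"
proof
  show "range circ \<subseteq> sphere 0 1" using circ_norm by auto
  show "sphere 0 1 \<subseteq> range circ"
  proof
    fix z :: complex assume "z \<in> sphere 0 1"
    then have "norm z = 1" by simp
    then obtain t where "z = Complex (cos t) (sin t)" using complex_unimodular_polar by blast
    then have "z = cis t" by (simp add: cis.ctr)
    also have "\<dots> = circ (t / (2*pi))" by (simp add: circ_def cis_conv_exp)
    finally show "z \<in> range circ" by blast
  qed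
qed

lemma continuous_circ: "continuous_on UNIV circ"
  unfolding circ_def by (intro continuous_intros)

lemma circ_open:
  assumes "open A"
  shows "openin (top_of_set (sphere 0 1)) (circ ` A)"
proof -
  define W where "W = (\<lambda>z::complex. Im z / (2*pi)) -` A"
  have "open W" unfolding W_def
    by (rule continuous_open_vimage[OF assms]) (intro continuous_intros, auto)
  have "openin (top_of_set (- {0})) (exp ` W)"
    by (rule covering_space_open_map[OF covering_space_exp_punctured_plane]) (use \<open>open W\<close> in auto)
  then have oW: "open (exp ` W)" by (rule openin_open_trans) auto
  have "circ ` A = sphere 0 1 \<inter> exp ` W"
  proof (intro equalityI subsetI)
    fix y assume "y \<in> circ ` A"
    then obtain t where t: "t \<in> A" "y = circ t" by auto
    have "\<i> * of_real (2*pi*t) \<in> W" using t by (simp add: W_def)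
    then show "y \<in> sphere 0 1 \<inter> exp ` W" using t circ_norm by (auto simp: circ_def)
  next
    fix y assume "y \<in> sphere 0 1 \<inter> exp ` W"
    then obtain z where z: "z \<in> W" "y = exp z" "norm (exp z) = 1" by auto
    then have "Re z = 0" by simp
    then have "z = \<i> * of_real (2*pi*(Im z / (2*pi)))" by (simp add: complex_eq_iff)
    then have "y = circ (Im z / (2*pi))" using z by (simp add: circ_def)
    moreover have "Im z / (2*pi) \<in> A" using z by (simp add: W_def)
    ultimately show "y \<in> circ ` A" by blast
  qed
  then show ?thesis using oW by (auto simp: openin_open)
qed



definition dt :: "real \<times> real \<Rightarrow> real \<times> real \<Rightarrow> real" where
  "dt a b = fst a * snd b - snd a * fst b"

definition crd :: "real \<times> real \<Rightarrow> real \<times> real \<Rightarrow> real \<times> real \<Rightarrow> real \<times> real" where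
  "crd u1 u2 w = (dt w u2 / dt u1 u2, dt u1 w / dt u1 u2)"

definition cmb :: "real \<times> real \<Rightarrow> real \<times> real \<Rightarrow> real \<times> real \<Rightarrow> real \<times> real" where
  "cmb u1 u2 x = fst x *\<^sub>R u1 + snd x *\<^sub>R u2"

lemma dt_cmb1: "dt (cmb u1 u2 x) u2 = fst x * dt u1 u2"
  by (simp add: dt_def cmb_def algebra_simps)

lemma dt_cmb2: "dt u1 (cmb u1 u2 x) = snd x * dt u1 u2"
  by (simp add: dt_def cmb_def algebra_simps)

lemma crd_cmb: "dt u1 u2 \<noteq> 0 \<Longrightarrow> crd u1 u2 (cmb u1 u2 x) = x"
proof -
  assume d: "dt u1 u2 \<noteq> 0"
  have "fst x * dt u1 u2 / dt u1 u2 = fst x" "snd x * dt u1 u2 / dt u1 u2 = snd x"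
    using d by simp_all
  then show ?thesis by (simp only: crd_def dt_cmb1 dt_cmb2 prod.collapse)
qed

lemma cmb_crd_aux: "dt w u2 *\<^sub>R u1 + dt u1 w *\<^sub>R u2 = dt u1 u2 *\<^sub>R w"
proof -
  obtain a b c d w1 w2 where u: "u1 = (a,b)" "u2 = (c,d)" "w = (w1,w2)" by (cases u1, cases u2, cases w) auto
  have "(w1 * d - w2 * c) * a + (a * w2 - b * w1) * c = (a * d - b * c) * w1" by (simp add: algebra_simps)
  moreover have "(w1 * d - w2 * c) * b + (a * w2 - b * w1) * d = (a * d - b * c) * w2" by (simp add: algebra_simps)
  ultimately show ?thesis by (simp add: u dt_def)
qed

lemma cmb_crd: "dt u1 u2 \<noteq> 0 \<Longrightarrow> cmb u1 u2 (crd u1 u2 w) = w"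
proof -
  assume d: "dt u1 u2 \<noteq> 0"
  have "cmb u1 u2 (crd u1 u2 w) = (1 / dt u1 u2) *\<^sub>R (dt w u2 *\<^sub>R u1 + dt u1 w *\<^sub>R u2)"
    by (simp add: cmb_def crd_def scaleR_add_right)
  also have "\<dots> = w" using d by (simp add: cmb_crd_aux)
  finally show ?thesis .
qed

lemma cont_crd: "continuous_on UNIV (crd u1 u2)"
proof -
  have e: "crd u1 u2 = (\<lambda>w. ((fst w * snd u2 - snd w * fst u2) * (1 / dt u1 u2),
                              (fst u1 * snd w - snd u1 * fst w) * (1 / dt u1 u2)))"
    by (simp add: fun_eq_iff crd_def dt_def)
  show ?thesis unfolding e
    by (intro continuous_on_Pair continuous_on_mult_right continuous_on_diff continuous_on_mult
          continuous_on_fst continuous_on_snd continuous_on_const continuous_on_id)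
qed

lemma cont_cmb: "continuous_on UNIV (cmb u1 u2)"
  unfolding cmb_def
  by (intro continuous_on_add continuous_on_scaleR continuous_on_fst continuous_on_snd continuous_on_const continuous_on_id)

lemma open_map_times:
  assumes f: "\<And>A. open A \<Longrightarrow> openin (top_of_set S) (f ` A)"
    and g: "\<And>B. open B \<Longrightarrow> openin (top_of_set T) (g ` B)"
    and W: "open W"
  shows "openin (top_of_set (S \<times> T)) ((\<lambda>(x,y). (f x, g y)) ` W)"
proof (subst openin_subopen, intro ballI)
  fix z assume "z \<in> (\<lambda>(x,y). (f x, g y)) ` W"
  then obtain a b where ab: "(a,b) \<in> W" "z = (f a, g b)" by auto
  obtain A B where AB: "open A" "open B" "(a,b) \<in> A \<times> B" "A \<times> B \<subseteq> W"
    using open_prod_elim[OF W ab(1)] by metis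
  show "\<exists>U. openin (top_of_set (S \<times> T)) U \<and> z \<in> U \<and> U \<subseteq> (\<lambda>(x,y). (f x, g y)) ` W"
  proof (intro exI conjI)
    show "openin (top_of_set (S \<times> T)) (f ` A \<times> g ` B)"
      by (rule openin_Times[OF f[OF AB(1)] g[OF AB(2)]])
    show "z \<in> f ` A \<times> g ` B" using AB ab by auto
    show "f ` A \<times> g ` B \<subseteq> (\<lambda>(x,y). (f x, g y)) ` W"
    proof
      fix y assume "y \<in> f ` A \<times> g ` B"
      then obtain x1 x2 where "x1 \<in> A" "x2 \<in> B" "y = (f x1, g x2)" by auto
      then show "y \<in> (\<lambda>(x,y). (f x, g y)) ` W" using AB(4) by (auto intro!: image_eqI[where x="(x1,x2)"])
    qed
  qed
qed

lemma orbit_homeo_from: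
  fixes F :: "real \<times> real \<Rightarrow> 'b::topological_space"
  assumes d: "dt u1 u2 \<noteq> 0"
    and cF: "continuous_on UNIV F" and rF: "range F = C"
    and oF: "\<And>V. open V \<Longrightarrow> openin (top_of_set C) (F ` V)"
    and fib: "\<And>w w'. F (crd u1 u2 w) = F (crd u1 u2 w') \<longleftrightarrow> \<phi> w q = \<phi> w' q"
  shows "orbit_homeomorphic \<phi> q C"
  unfolding orbit_homeomorphic_def
proof (intro exI conjI allI impI)
  let ?h = "\<lambda>w. F (crd u1 u2 w)"
  show "continuous_on UNIV ?h"
    by (rule continuous_on_compose2[OF cF cont_crd]) auto
  have "range (crd u1 u2) = UNIV" using crd_cmb[OF d] by (metis surjI)
  then show "range ?h = C" using rF by (metis image_image)
  fix U :: "(real \<times> real) set" assume "open U"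
  have "crd u1 u2 ` U = cmb u1 u2 -` U"
  proof (intro equalityI subsetI)
    fix x assume "x \<in> crd u1 u2 ` U" then show "x \<in> cmb u1 u2 -` U" using cmb_crd[OF d] by auto
  next
    fix x assume "x \<in> cmb u1 u2 -` U"
    then have "cmb u1 u2 x \<in> U" by simp
    then show "x \<in> crd u1 u2 ` U" using crd_cmb[OF d, of x] by (metis image_eqI)
  qed
  moreover have "open (cmb u1 u2 -` U)"
    using open_vimage[OF \<open>open U\<close> cont_cmb] by simp
  ultimately have "open (crd u1 u2 ` U)" by simp
  then have "openin (top_of_set C) (F ` (crd u1 u2 ` U))" by (rule oF)
  then show "openin (top_of_set C) (?h ` U)" by (simp add: image_image)
next
  fix w w' show "F (crd u1 u2 w) = F (crd u1 u2 w') \<longleftrightarrow> \<phi> w q = \<phi> w' q" by (rule fib)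
qed



lemma grp_add:
  fixes H :: "'a::ab_group_add set"
  assumes "0 \<in> H" "\<And>x y. x \<in> H \<Longrightarrow> y \<in> H \<Longrightarrow> x - y \<in> H" "x \<in> H" "y \<in> H"
  shows "x + y \<in> H"
proof -
  have "0 - y \<in> H" using assms by blast
  then have "x - (0 - y) \<in> H" using assms by blast
  then show ?thesis by simp
qed

lemma grp_nat:
  fixes H :: "'a::real_vector set"
  assumes "0 \<in> H" "\<And>x y. x \<in> H \<Longrightarrow> y \<in> H \<Longrightarrow> x - y \<in> H" "x \<in> H"
  shows "of_nat n *\<^sub>R x \<in> H"
proof (induction n)
  case 0 then show ?case using assms by simp
next
  case (Suc n)
  have "of_nat n *\<^sub>R x + x \<in> H" by (rule grp_add[OF assms(1,2) Suc assms(3)])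
  then show ?case by (simp add: algebra_simps)
qed

lemma grp_int:
  fixes H :: "'a::real_vector set"
  assumes "0 \<in> H" "\<And>x y. x \<in> H \<Longrightarrow> y \<in> H \<Longrightarrow> x - y \<in> H" "x \<in> H"
  shows "of_int k *\<^sub>R x \<in> H"
proof (cases "k \<ge> 0")
  case True
  then have "of_int k *\<^sub>R x = of_nat (nat k) *\<^sub>R x" by simp
  then show ?thesis using grp_nat[OF assms, of "nat k"] by metis
next
  case False
  then have "of_int k *\<^sub>R x = 0 - of_nat (nat (-k)) *\<^sub>R x" by (simp add: scaleR_left.minus)
  then show ?thesis using grp_nat[OF assms, of "nat (-k)"] assms by metis
qed

lemma real_cyclic:
  fixes H :: "real set"
  assumes H0: "0 \<in> H" and Hs: "\<And>x y. x \<in> H \<Longrightarrow> y \<in> H \<Longrightarrow> x - y \<in> H"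
    and e: "e > 0" "\<forall>x\<in>H. x \<noteq> 0 \<longrightarrow> e \<le> \<bar>x\<bar>"
    and h: "h \<in> H" "h \<noteq> 0"
  shows "\<exists>t0>0. t0 \<in> H \<and> (\<forall>x\<in>H. \<exists>k::int. x = of_int k * t0)"
proof -
  define h' where "h' = \<bar>h\<bar>"
  have h'H: "h' \<in> H" using h H0 Hs unfolding h'_def by (cases "h \<ge> 0") (auto, metis diff_0)
  have h'p: "h' > 0" using h unfolding h'_def by simp
  define S where "S = H \<inter> {0<..h'}"
  have "uniform_discrete S"
    unfolding uniform_discrete_def
  proof (intro exI[of _ e] conjI ballI impI)
    fix x y assume xy: "x \<in> S" "y \<in> S" "dist x y < e"
    then have "x - y \<in> H" using Hs unfolding S_def by auto
    then show "x = y" using e xy by (metis dist_real_def eq_iff_diff_eq_0 not_le)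
  qed (use e in auto)
  moreover have "bounded S" unfolding S_def by (rule bounded_subset[of "{0..h'}"]) auto
  ultimately have fS: "finite S" using uniform_discrete_finite_iff by blast
  have h'S: "h' \<in> S" using h'H h'p unfolding S_def by auto
  define t0 where "t0 = Min S"
  have t0S: "t0 \<in> S" unfolding t0_def using fS h'S Min_in by blast
  have t0min: "\<And>y. y \<in> S \<Longrightarrow> t0 \<le> y" unfolding t0_def using fS by simp
  have t0p: "t0 > 0" "t0 \<in> H" using t0S unfolding S_def by auto
  have "\<forall>x\<in>H. \<exists>k::int. x = of_int k * t0"
  proof
    fix x assume xH: "x \<in> H"
    define k where "k = \<lfloor>x / t0\<rfloor>"
    have "of_int k *\<^sub>R t0 \<in> H" by (rule grp_int[OF H0 Hs t0p(2)])
    then have rH: "x - of_int k * t0 \<in> H" using Hs xH by simp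
    have "of_int k \<le> x / t0" "x / t0 < of_int k + 1" unfolding k_def by linarith+
    then have r1: "of_int k * t0 \<le> x" "x < of_int k * t0 + t0" using t0p
      by (simp_all add: field_simps)
    show "\<exists>k::int. x = of_int k * t0"
    proof (rule exI[of _ k], rule ccontr)
      assume "x \<noteq> of_int k * t0"
      then have "x - of_int k * t0 \<in> S" using rH r1 t0min[OF h'S] unfolding S_def by auto
      then have "t0 \<le> x - of_int k * t0" by (rule t0min)
      then show False using r1 by simp
    qed
  qed
  then show ?thesis using t0p by blast
qed



lemma line_cyclic:
  fixes G :: "(real \<times> real) set"
  assumes G0: "0 \<in> G" and Gs: "\<And>x y. x \<in> G \<Longrightarrow> y \<in> G \<Longrightarrow> x - y \<in> G"
    and e: "e > 0" "\<forall>x\<in>G. x \<noteq> 0 \<longrightarrow> e \<le> norm x"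
    and v: "v \<in> G" "v \<noteq> 0"
  shows "\<exists>t0>0. t0 *\<^sub>R v \<in> G \<and> (\<forall>c. c *\<^sub>R v \<in> G \<longrightarrow> (\<exists>k::int. c = of_int k * t0))"
proof -
  define H where "H = {c. c *\<^sub>R v \<in> G}"
  have "\<exists>t0>0. t0 \<in> H \<and> (\<forall>x\<in>H. \<exists>k::int. x = of_int k * t0)"
  proof (rule real_cyclic[of H "e / norm v" 1])
    show "0 \<in> H" using G0 by (simp add: H_def)
    show "x - y \<in> H" if "x \<in> H" "y \<in> H" for x y
      using Gs[OF that[unfolded H_def, simplified]] by (simp add: H_def scaleR_diff_left)
    show "e / norm v > 0" using e v by simp
    show "\<forall>x\<in>H. x \<noteq> 0 \<longrightarrow> e / norm v \<le> \<bar>x\<bar>"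
    proof (intro ballI impI)
      fix x assume "x \<in> H" "x \<noteq> 0"
      then have "x *\<^sub>R v \<in> G" "x *\<^sub>R v \<noteq> 0" using v by (auto simp: H_def)
      then have "e \<le> norm (x *\<^sub>R v)" using e by blast
      then show "e / norm v \<le> \<bar>x\<bar>" using v by (simp add: divide_le_eq)
    qed
    show "1 \<in> H" using v by (simp add: H_def)
  qed simp
  then show ?thesis unfolding H_def by auto
qed

lemma dt_zero:
  assumes "u \<noteq> 0" "dt u x = 0"
  shows "\<exists>c. x = c *\<^sub>R u"
proof (cases "fst u = 0")
  case True
  then have "snd u \<noteq> 0" using assms(1) by (simp add: prod_eq_iff)
  then show ?thesis using assms True
    by (intro exI[of _ "snd x / snd u"]) (auto simp: dt_def prod_eq_iff field_simps)
next
  case False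
  then show ?thesis using assms
    by (intro exI[of _ "fst x / fst u"]) (auto simp: dt_def prod_eq_iff field_simps)
qed

lemma dt_diff2: "dt u (x - y) = dt u x - dt u y"
  by (simp add: dt_def algebra_simps)
lemma dt_scale2: "dt u (c *\<^sub>R x) = c * dt u x"
  by (simp add: dt_def algebra_simps)
lemma dt_diff1: "dt (x - y) u = dt x u - dt y u"
  by (simp add: dt_def algebra_simps)
lemma dt_scale1: "dt (c *\<^sub>R x) u = c * dt x u"
  by (simp add: dt_def algebra_simps)
lemma dt_self: "dt u u = 0"
  by (simp add: dt_def algebra_simps)

lemma classify:
  fixes G :: "(real \<times> real) set"
  assumes G0: "0 \<in> G" and Gs: "\<And>x y. x \<in> G \<Longrightarrow> y \<in> G \<Longrightarrow> x - y \<in> G"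
    and e: "e > 0" "\<forall>x\<in>G. x \<noteq> 0 \<longrightarrow> e \<le> norm x"
    and v: "v \<in> G" "v \<noteq> 0"
  shows "(\<exists>u. u \<noteq> 0 \<and> G = range (\<lambda>k::int. of_int k *\<^sub>R u)) \<or>
         (\<exists>u1 u2. dt u1 u2 \<noteq> 0 \<and> G = {of_int k *\<^sub>R u1 + of_int l *\<^sub>R u2 | k l :: int. True})"
proof -
  obtain t0 where t0: "t0 > 0" "t0 *\<^sub>R v \<in> G" "\<And>c. c *\<^sub>R v \<in> G \<Longrightarrow> (\<exists>k::int. c = of_int k * t0)"
    using line_cyclic[OF G0 Gs e v] by blast
  define u where "u = t0 *\<^sub>R v"
  have uG: "u \<in> G" and un0: "u \<noteq> 0" using t0 v by (auto simp: u_def)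
  have line: "\<exists>k::int. x = of_int k *\<^sub>R u" if xG: "x \<in> G" and dx: "dt u x = 0" for x
  proof -
    obtain c where c: "x = c *\<^sub>R u" using dt_zero[OF un0 dx] by blast
    then have "(c * t0) *\<^sub>R v \<in> G" using xG by (simp add: u_def)
    then obtain k :: int where "c * t0 = of_int k * t0" using t0(3) by blast
    then have "c = of_int k" using t0(1) by simp
    then show ?thesis using c by blast
  qed
  have intG: "of_int k *\<^sub>R x \<in> G" if "x \<in> G" for k x by (rule grp_int[OF G0 Gs that])
  show ?thesis
  proof (cases "\<forall>g\<in>G. dt u g = 0")
    case True
    have "G = range (\<lambda>k::int. of_int k *\<^sub>R u)"
      using line True intG[OF uG] by blast
    then show ?thesis using un0 by blast
  next
    case False
    then obtain g0 where g0: "g0 \<in> G" "dt u g0 \<noteq> 0" by blast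
    define d where "d = dt u g0"
    define K where "K = (\<lambda>g. dt u g) ` G"
    define F where "F = {g \<in> G. 0 \<le> fst (crd u g0 g) \<and> fst (crd u g0 g) < 1 \<and> \<bar>dt u g\<bar> \<le> \<bar>d\<bar>}"
    have "uniform_discrete F"
      unfolding uniform_discrete_def
    proof (intro exI[of _ e] conjI ballI impI)
      fix x y assume xy: "x \<in> F" "y \<in> F" "dist x y < e"
      then have "x - y \<in> G" using Gs unfolding F_def by auto
      then show "x = y" using e xy by (metis dist_norm eq_iff_diff_eq_0 not_le)
    qed (use e in auto)
    moreover have "bounded F"
    proof -
      have "norm g \<le> norm u + norm g0" if "g \<in> F" for g
      proof -
        have g: "g = cmb u g0 (crd u g0 g)" using cmb_crd g0(2) by metis
        have a: "\<bar>fst (crd u g0 g)\<bar> \<le> 1" using that unfolding F_def by auto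
        have "\<bar>dt u g / d\<bar> \<le> 1" using that g0(2) unfolding F_def d_def
          by (auto simp: abs_div divide_le_eq)
        then have b: "\<bar>snd (crd u g0 g)\<bar> \<le> 1" by (simp add: crd_def d_def)
        have "norm g \<le> norm (fst (crd u g0 g) *\<^sub>R u) + norm (snd (crd u g0 g) *\<^sub>R g0)"
          by (subst g) (simp only: cmb_def norm_triangle_ineq)
        also have "\<dots> \<le> 1 * norm u + 1 * norm g0"
          using a b by (intro add_mono; simp only: norm_scaleR real_norm_def; intro mult_right_mono) auto
        finally show ?thesis by simp
      qed
      then show ?thesis unfolding bounded_iff by blast
    qed
    ultimately have fF: "finite F" using uniform_discrete_finite_iff by blast
    define P where "P = (\<lambda>g. \<bar>dt u g\<bar>) ` {g \<in> F. dt u g \<noteq> 0}"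
    have fP: "finite P" using fF unfolding P_def by simp
    have g0F: "g0 \<in> F" using g0 by (simp add: F_def crd_def dt_self d_def)
    have dP: "\<bar>d\<bar> \<in> P" using g0F g0 unfolding P_def d_def by auto
    define e' where "e' = Min P"
    have e'P: "e' \<in> P" unfolding e'_def using fP dP Min_in by blast
    have e'min: "\<And>y. y \<in> P \<Longrightarrow> e' \<le> y" unfolding e'_def using fP by simp
    have e'p: "e' > 0" using e'P unfolding P_def by auto
    have "\<exists>t1>0. t1 \<in> K \<and> (\<forall>x\<in>K. \<exists>k::int. x = of_int k * t1)"
    proof (rule real_cyclic[of K e' d])
      show "0 \<in> K" using G0 by (auto simp: K_def dt_def intro!: image_eqI[where x=0])
      show "x - y \<in> K" if xK: "x \<in> K" and yK: "y \<in> K" for x y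
      proof -
        obtain gx gy where "gx \<in> G" "gy \<in> G" "x = dt u gx" "y = dt u gy" using xK yK unfolding K_def by blast
        then show ?thesis unfolding K_def using Gs by (auto simp: dt_diff2[symmetric] intro!: image_eqI)
      qed
      show "e' > 0" by (rule e'p)
      show "\<forall>x\<in>K. x \<noteq> 0 \<longrightarrow> e' \<le> \<bar>x\<bar>"
      proof (intro ballI impI)
        fix k assume "k \<in> K" "k \<noteq> 0"
        then obtain g where g: "g \<in> G" "k = dt u g" unfolding K_def by auto
        show "e' \<le> \<bar>k\<bar>"
        proof (cases "\<bar>d\<bar> \<le> \<bar>k\<bar>")
          case True then show ?thesis using e'min[OF dP] by simp
        next
          case False
          define a where "a = fst (crd u g0 g)"
          define g' where "g' = g - of_int \<lfloor>a\<rfloor> *\<^sub>R u"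
          have g'G: "g' \<in> G" unfolding g'_def using Gs g intG[OF uG] by blast
          have dtg': "dt u g' = k" unfolding g'_def using g by (simp add: dt_diff2 dt_scale2 dt_self)
          have "fst (crd u g0 g') = a - of_int \<lfloor>a\<rfloor>"
            using g0(2) unfolding g'_def a_def crd_def by (simp add: dt_diff1 dt_scale1 field_simps)
          then have "g' \<in> F" using g'G dtg' False unfolding F_def
            by (auto simp: floor_less_iff) linarith
          then have "\<bar>k\<bar> \<in> P" using dtg' \<open>k \<noteq> 0\<close> unfolding P_def by force
          then show ?thesis by (rule e'min)
        qed
      qed
      show "d \<in> K" using g0 unfolding K_def d_def by auto
      show "d \<noteq> 0" using g0 unfolding d_def by simp
    qed
    then obtain t1 where t1: "t1 > 0" "t1 \<in> K" "\<And>x. x \<in> K \<Longrightarrow> \<exists>k::int. x = of_int k * t1" by blast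
    obtain g1 where g1: "g1 \<in> G" "dt u g1 = t1" using t1(2) unfolding K_def by auto
    have "G = {of_int k *\<^sub>R u + of_int l *\<^sub>R g1 | k l :: int. True}"
    proof (intro equalityI subsetI)
      fix g assume gG: "g \<in> G"
      then obtain l :: int where l: "dt u g = of_int l * t1" using t1(3) unfolding K_def by auto
      have "g - of_int l *\<^sub>R g1 \<in> G" using Gs gG intG[OF g1(1)] by blast
      moreover have "dt u (g - of_int l *\<^sub>R g1) = 0" using l g1 by (simp add: dt_diff2 dt_scale2)
      ultimately obtain k :: int where "g - of_int l *\<^sub>R g1 = of_int k *\<^sub>R u" using line by blast
      then have "g = of_int k *\<^sub>R u + of_int l *\<^sub>R g1" by (simp add: algebra_simps)
      then show "g \<in> {of_int k *\<^sub>R u + of_int l *\<^sub>R g1 | k l :: int. True}" by blast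
    next
      fix g assume "g \<in> {of_int k *\<^sub>R u + of_int l *\<^sub>R g1 | k l :: int. True}"
      then obtain k l :: int where "g = of_int k *\<^sub>R u + of_int l *\<^sub>R g1" by blast
      then show "g \<in> G" using grp_add[OF G0 Gs intG[OF uG] intG[OF g1(1)]] by simp
    qed
    then show ?thesis using g1 t1 by (intro disjI2 exI[of _ u] exI[of _ g1]) auto
  qed
qed



lemma dt_add1: "dt (x + y) u = dt x u + dt y u"
  by (simp add: dt_def algebra_simps)
lemma dt_add2: "dt u (x + y) = dt u x + dt u y"
  by (simp add: dt_def algebra_simps)

lemma crd_add: "crd u1 u2 (x + y) = crd u1 u2 x + crd u1 u2 y"
  by (simp only: crd_def dt_add1 dt_add2 add_divide_distrib add_Pair)

lemma cmb_add: "cmb u1 u2 (x + y) = cmb u1 u2 x + cmb u1 u2 y"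
  by (simp add: cmb_def algebra_simps)

lemma crd_shift:
  assumes d: "dt u1 u2 \<noteq> 0"
  shows "crd u1 u2 w = crd u1 u2 w' + z \<longleftrightarrow> w = w' + cmb u1 u2 z"
proof
  assume "crd u1 u2 w = crd u1 u2 w' + z"
  then have "cmb u1 u2 (crd u1 u2 w) = cmb u1 u2 (crd u1 u2 w' + z)" by simp
  then show "w = w' + cmb u1 u2 z" using cmb_crd[OF d] by (simp add: cmb_add)
next
  assume "w = w' + cmb u1 u2 z"
  then show "crd u1 u2 w = crd u1 u2 w' + z" using crd_cmb[OF d] by (simp add: crd_add)
qed

lemma cyl_open: "open V \<Longrightarrow> openin (top_of_set cylinder) ((\<lambda>(x::real,y::real). (circ x, y)) ` V)"
  unfolding cylinder_def
  using open_map_times[of "sphere 0 1" circ UNIV "\<lambda>y. y" V] circ_open by simp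

lemma tor_open: "open V \<Longrightarrow> openin (top_of_set torus) ((\<lambda>(x,y). (circ x, circ y)) ` V)"
  unfolding torus_def
  using open_map_times[of "sphere 0 1" circ "sphere 0 1" circ V] circ_open by simp

lemma cyl_range: "range (\<lambda>(x::real,y::real). (circ x, y)) = cylinder"
proof (intro equalityI subsetI)
  fix z assume "z \<in> range (\<lambda>(x::real,y::real). (circ x, y))"
  then obtain a b where "z = (circ a, b)" by auto
  then show "z \<in> cylinder" unfolding cylinder_def using circ_norm by simp
next
  fix z assume "z \<in> cylinder"
  then obtain c b where z: "z = (c, b)" "c \<in> sphere 0 1" unfolding cylinder_def by auto
  then obtain a where "c = circ a" using circ_surj by (metis rangeE)
  then have "z = (\<lambda>(x::real,y::real). (circ x, y)) (a, b)" using z by simp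
  then show "z \<in> range (\<lambda>(x::real,y::real). (circ x, y))" by (rule range_eqI)
qed

lemma tor_range: "range (\<lambda>(x,y). (circ x, circ y)) = torus"
proof (intro equalityI subsetI)
  fix z assume "z \<in> range (\<lambda>(x,y). (circ x, circ y))"
  then obtain a b where "z = (circ a, circ b)" by auto
  then show "z \<in> torus" unfolding torus_def using circ_norm by simp
next
  fix z assume "z \<in> torus"
  then obtain c d where z: "z = (c, d)" "c \<in> sphere 0 1" "d \<in> sphere 0 1" unfolding torus_def by auto
  then obtain a b where "c = circ a" "d = circ b" using circ_surj by (metis rangeE)
  then have "z = (\<lambda>(x,y). (circ x, circ y)) (a, b)" using z by simp
  then show "z \<in> range (\<lambda>(x,y). (circ x, circ y))" by (rule range_eqI)
qed

lemma circ_fst_cont: "continuous_on UNIV (\<lambda>z::real\<times>real. circ (fst z))"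
  by (rule continuous_on_compose2[OF continuous_circ continuous_on_fst[OF continuous_on_id]]) auto

lemma circ_snd_cont: "continuous_on UNIV (\<lambda>z::real\<times>real. circ (snd z))"
  by (rule continuous_on_compose2[OF continuous_circ continuous_on_snd[OF continuous_on_id]]) auto

lemma cyl_cont: "continuous_on UNIV (\<lambda>(x::real,y::real). (circ x, y))"
proof -
  have "continuous_on UNIV (\<lambda>z::real\<times>real. (circ (fst z), snd z))"
    by (rule continuous_on_Pair[OF circ_fst_cont continuous_on_snd[OF continuous_on_id]])
  then show ?thesis by (simp add: case_prod_beta')
qed

lemma tor_cont: "continuous_on UNIV (\<lambda>(x::real,y::real). (circ x, circ y))"
proof -
  have "continuous_on UNIV (\<lambda>z::real\<times>real. (circ (fst z), circ (snd z)))"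
    by (rule continuous_on_Pair[OF circ_fst_cont circ_snd_cont])
  then show ?thesis by (simp add: case_prod_beta')
qed

lemma sphere_not_sc: "\<not> simply_connected (sphere (0::complex) 1)"
  by (simp add: simply_connected_sphere_eq)

lemma cylinder_not_sc: "\<not> simply_connected cylinder"
proof
  assume "simply_connected cylinder"
  moreover have "continuous_on cylinder fst" by (intro continuous_intros)
  moreover have "fst ` cylinder = sphere 0 1" unfolding cylinder_def by force
  moreover have "continuous_on (sphere 0 1) (\<lambda>z::complex. (z, 0::real))" by (intro continuous_intros)
  moreover have "(\<lambda>z::complex. (z, 0::real)) \<in> sphere 0 1 \<rightarrow> cylinder" unfolding cylinder_def by auto
  ultimately have "simply_connected (sphere (0::complex) 1)"
    by (rule simply_connected_retraction_gen) auto
  then show False using sphere_not_sc by blast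
qed


theorem mainTheorem4:
  fixes M :: "'a::euclidean_space set" and \<phi> :: "real \<times> real \<Rightarrow> 'a \<Rightarrow> 'a" and p :: 'a
  assumes "closed_manifold M"
    and "C1_action M \<phi>"
    and "p \<in> M"
    and "closure (orbit \<phi> p) = M"
    and "orbit_homeomorphic \<phi> p cylinder"
  shows "\<forall>q\<in>M. two_dim_orbit \<phi> q \<longrightarrow>
           orbit_homeomorphic \<phi> q torus \<or> orbit_homeomorphic \<phi> q cylinder"
proof -
  have inM: "\<And>w x. x \<in> M \<Longrightarrow> \<phi> w x \<in> M"
    and act0: "\<And>x. x \<in> M \<Longrightarrow> \<phi> 0 x = x"
    and actadd: "\<And>w w' x. x \<in> M \<Longrightarrow> \<phi> (w + w') x = \<phi> w (\<phi> w' x)"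
    and cont: "continuous_on (UNIV \<times> M) (\<lambda>(w, x). \<phi> w x)"
    using assms(2) unfolding C1_action_def by blast+
  have clM: "closed M" using assms(1) unfolding closed_manifold_def by (simp add: compact_imp_closed)
  have fibre: "\<phi> w q = \<phi> w' q \<longleftrightarrow> \<phi> (w - w') q = q" if qM: "q \<in> M" for q w w'
  proof
    assume h: "\<phi> w q = \<phi> w' q"
    have "\<phi> (w - w') q = \<phi> (- w') (\<phi> w q)" using actadd[OF qM, of "-w'" w] by simp
    also have "\<dots> = \<phi> (- w') (\<phi> w' q)" using h by simp
    also have "\<dots> = q" using actadd[OF qM, of "-w'" w'] act0[OF qM] by simp
    finally show "\<phi> (w - w') q = q" .
  next
    assume h: "\<phi> (w - w') q = q"
    have "\<phi> w q = \<phi> w' (\<phi> (w - w') q)" using actadd[OF qM, of w' "w - w'"] by simp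
    then show "\<phi> w q = \<phi> w' q" using h by simp
  qed
  obtain v where v: "v \<noteq> 0" "\<phi> v p = p"
  proof (rule ccontr)
    assume "\<not> thesis"
    then have triv: "\<And>w. \<phi> w p = p \<Longrightarrow> w = 0" using that by blast
    obtain h :: "real \<times> real \<Rightarrow> complex \<times> real" where h: "continuous_on UNIV h" "h ` UNIV = cylinder"
      "\<And>U. open U \<Longrightarrow> openin (top_of_set cylinder) (h ` U)"
      "\<And>w w'. h w = h w' \<longleftrightarrow> \<phi> w p = \<phi> w' p"
      using assms(5) unfolding orbit_homeomorphic_def by blast
    have "inj_on h UNIV"
    proof (rule inj_onI)
      fix w w' assume "h w = h w'"
      then have "\<phi> (w - w') p = p" using h(4) fibre[OF assms(3)] by blast
      then have "w - w' = 0" by (rule triv)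
      then show "w = w'" by simp
    qed
    then obtain g where "homeomorphism UNIV cylinder h g"
      using homeomorphism_injective_open_map[OF h(1) h(2)] h(3) by (metis subtopology_UNIV open_openin)
    then have "(UNIV :: (real \<times> real) set) homeomorphic cylinder" unfolding homeomorphic_def by blast
    moreover have "simply_connected (UNIV :: (real \<times> real) set)"
      by (rule convex_imp_simply_connected) simp
    ultimately show False using cylinder_not_sc homeomorphic_simply_connected by blast
  qed
  have vfix: "\<phi> v q = q" if qM: "q \<in> M" for q
  proof -
    have "continuous_on M (\<lambda>x. (v, x))" by (intro continuous_on_Pair continuous_on_const continuous_on_id)
    then have "continuous_on M (\<lambda>x. (\<lambda>(w, x). \<phi> w x) (v, x))"
      by (rule continuous_on_compose2[OF cont]) auto
    then have cv: "continuous_on M (\<lambda>x. \<phi> v x)" by simp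
    have "closed {x \<in> M. \<phi> v x - x = 0}"
      by (rule continuous_closed_preimage_constant[OF continuous_on_diff[OF cv continuous_on_id] clM])
    moreover have "orbit \<phi> p \<subseteq> {x \<in> M. \<phi> v x - x = 0}"
    proof
      fix x assume "x \<in> orbit \<phi> p"
      then obtain w where x: "x = \<phi> w p" unfolding orbit_def by auto
      have "\<phi> v x = \<phi> (v + w) p" using actadd[OF assms(3)] x by simp
      also have "\<dots> = \<phi> (w + v) p" by (simp add: add.commute)
      also have "\<dots> = x" using actadd[OF assms(3), of w v] v(2) x by simp
      finally show "x \<in> {x \<in> M. \<phi> v x - x = 0}" using x inM[OF assms(3)] by simp
    qed
    ultimately have "closure (orbit \<phi> p) \<subseteq> {x \<in> M. \<phi> v x - x = 0}" by (simp add: closure_minimal)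
    then show ?thesis using qM assms(4) by auto
  qed
  show ?thesis
  proof (intro ballI impI)
    fix q assume qM: "q \<in> M" and td: "two_dim_orbit \<phi> q"
    define G where "G = isotropy \<phi> q"
    have G0: "0 \<in> G" using act0[OF qM] by (simp add: G_def isotropy_def)
    have Gs: "x - y \<in> G" if "x \<in> G" "y \<in> G" for x y
      using that fibre[OF qM, of x y] by (simp add: G_def isotropy_def)
    have fibG: "\<phi> w q = \<phi> w' q \<longleftrightarrow> w - w' \<in> G" for w w'
      using fibre[OF qM] by (simp add: G_def isotropy_def)
    have vG: "v \<in> G" using vfix[OF qM] by (simp add: G_def isotropy_def)
    have "0 isolated_in G" using td G0 unfolding two_dim_orbit_def G_def by (simp add: discreteD)
    then obtain e where e: "e > 0" "\<forall>y\<in>G. dist 0 y < e \<longrightarrow> y = 0"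
      unfolding isolated_in_dist_Ex_iff by blast
    have e2: "\<forall>x\<in>G. x \<noteq> 0 \<longrightarrow> e \<le> norm x" using e(2) by (auto simp: not_less[symmetric])
    from classify[OF G0 Gs e(1) e2 vG v(1)]
    show "orbit_homeomorphic \<phi> q torus \<or> orbit_homeomorphic \<phi> q cylinder"
    proof
      assume "\<exists>u. u \<noteq> 0 \<and> G = range (\<lambda>k::int. of_int k *\<^sub>R u)"
      then obtain u where u: "u \<noteq> 0" "G = range (\<lambda>k::int. of_int k *\<^sub>R u)" by blast
      define u2 where "u2 = (- snd u, fst u)"
      have d: "dt u u2 \<noteq> 0" using u(1) unfolding u2_def dt_def
        by (cases u) (auto simp: add_nonneg_eq_0_iff zero_prod_def)
      have "orbit_homeomorphic \<phi> q cylinder"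
      proof (rule orbit_homeo_from[OF d cyl_cont cyl_range cyl_open])
        fix w w'
        have "(\<lambda>(x::real,y::real). (circ x, y)) (crd u u2 w) = (\<lambda>(x::real,y::real). (circ x, y)) (crd u u2 w')
              \<longleftrightarrow> (\<exists>n::int. crd u u2 w = crd u u2 w' + (of_int n, 0))"
          by (cases "crd u u2 w"; cases "crd u u2 w'") (auto simp: circ_eq_iff)
        also have "\<dots> \<longleftrightarrow> (\<exists>n::int. w = w' + of_int n *\<^sub>R u)"
          by (simp add: crd_shift[OF d] cmb_def)
        also have "\<dots> \<longleftrightarrow> w - w' \<in> G" using u(2) by (auto simp: algebra_simps)
        finally show "(\<lambda>(x::real,y::real). (circ x, y)) (crd u u2 w) = (\<lambda>(x::real,y::real). (circ x, y)) (crd u u2 w')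
              \<longleftrightarrow> \<phi> w q = \<phi> w' q" using fibG by simp
      qed
      then show ?thesis by blast
    next
      assume "\<exists>u1 u2. dt u1 u2 \<noteq> 0 \<and> G = {of_int k *\<^sub>R u1 + of_int l *\<^sub>R u2 | k l :: int. True}"
      then obtain u1 u2 where d: "dt u1 u2 \<noteq> 0"
        and u: "G = {of_int k *\<^sub>R u1 + of_int l *\<^sub>R u2 | k l :: int. True}" by blast
      have "orbit_homeomorphic \<phi> q torus"
      proof (rule orbit_homeo_from[OF d tor_cont tor_range tor_open])
        fix w w'
        have "(\<lambda>(x,y). (circ x, circ y)) (crd u1 u2 w) = (\<lambda>(x,y). (circ x, circ y)) (crd u1 u2 w')
              \<longleftrightarrow> (\<exists>n m::int. crd u1 u2 w = crd u1 u2 w' + (of_int n, of_int m))"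
          by (cases "crd u1 u2 w"; cases "crd u1 u2 w'") (auto simp: circ_eq_iff)
        also have "\<dots> \<longleftrightarrow> (\<exists>n m::int. w = w' + (of_int n *\<^sub>R u1 + of_int m *\<^sub>R u2))"
          by (simp add: crd_shift[OF d] cmb_def)
        also have "\<dots> \<longleftrightarrow> w - w' \<in> G" using u by (auto simp: algebra_simps)
        finally show "(\<lambda>(x,y). (circ x, circ y)) (crd u1 u2 w) = (\<lambda>(x,y). (circ x, circ y)) (crd u1 u2 w')
              \<longleftrightarrow> \<phi> w q = \<phi> w' q" using fibG by simp
      qed
      then show ?thesis by blast
    qed
  qed
qed


end
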